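(* Let $\mathcal{L}$ be a countable collection of languages containing two distinct languages $L_i,L_j$ with $|L_i\cap L_j|=\infty$ and $|L_i\setminus L_j|<\infty$. Then for every $\varepsilon>0$, no online randomized identification algorithm that is $\varepsilon$-DP in the continual release model identifies $\mathcal{L}$ in the limit.
   Context: $\mathcal{X}$ is a countable universe; a language is an infinite subset of $\mathcal{X}$; $\mathcal{L}=\{L_1,L_2,\dots\}$ is a countable collection known to the algorithm. An enumeration of $K$ is an infinite sequence $x_1,x_2,\dots$ of elements of $K$ (repetitions allowed) in which every element of $K$ appears. An online randomized identification algorithm, after seeing $x_{1:n}$, outputs an index $i_n$ depending only on $x_{1:n}$ and internal randomness (no computability constraints). It identifies $\mathcal{L}$ in the limit if for every $K\in\mathcal{L}$ and every enumeration of $K$, with probability $1$ there exists $n^\star$ such that for all $n\ge n^\star$, $i_n=i_{n^\star}$ and $L_{i_n}=K$. Streams are neighboring if they differ at exactly one time step; the algorithm is $\varepsilon$-DP in the continual release model if for all neighboring input streams $x,x'$ and every measurable set $E$ of entire output sequences, $\Pr[(i_n)_n(x)\in E]\le e^\varepsilon\Pr[(i_n)_n(x')\in E]$. *)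

theory Defs
  imports "HOL-Probability.Probability"
begin

text \<open>Streams are \<open>s :: nat \<Rightarrow> 'x\<close> (the paper's x_1, x_2, ... is s 0, s 1, ...).
  A randomized online algorithm is a probability space \<open>M\<close> of internal randomness
  together with \<open>A :: 'x list \<Rightarrow> 'w \<Rightarrow> nat\<close>: after seeing the prefix x_{1:n}
  (the list of the first n stream elements) with randomness \<open>\<omega>\<close> it outputs the
  index \<open>A [x_1,...,x_n] \<omega>\<close>.\<close>

definition prefix_of :: "(nat \<Rightarrow> 'x) \<Rightarrow> nat \<Rightarrow> 'x list" where
  "prefix_of s n = map s [0..<n]"

text \<open>The entire output sequence (i_1, i_2, ...) ; index n here corresponds to i_{n+1}.\<close>
definition output_seq :: "('x list \<Rightarrow> 'w \<Rightarrow> nat) \<Rightarrow> (nat \<Rightarrow> 'x) \<Rightarrow> 'w \<Rightarrow> (nat \<Rightarrow> nat)" where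
  "output_seq A s \<omega> = (\<lambda>n. A (prefix_of s (Suc n)) \<omega>)"

definition online_rand_alg :: "'w measure \<Rightarrow> ('x list \<Rightarrow> 'w \<Rightarrow> nat) \<Rightarrow> bool" where
  "online_rand_alg M A \<longleftrightarrow> prob_space M \<and>
     (\<forall>xs. A xs \<in> measurable M (count_space UNIV))"

definition is_language :: "'x set \<Rightarrow> bool" where
  "is_language K \<longleftrightarrow> infinite K"

definition is_enumeration :: "(nat \<Rightarrow> 'x) \<Rightarrow> 'x set \<Rightarrow> bool" where
  "is_enumeration s K \<longleftrightarrow> range s = K"

definition identifies_in_limit ::
  "'w measure \<Rightarrow> ('x list \<Rightarrow> 'w \<Rightarrow> nat) \<Rightarrow> (nat \<Rightarrow> 'x set) \<Rightarrow> bool" where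
  "identifies_in_limit M A L \<longleftrightarrow>
     (\<forall>K \<in> range L. \<forall>s. is_enumeration s K \<longrightarrow>
        (AE \<omega> in M. \<exists>n0\<ge>1. \<forall>n\<ge>n0.
            A (prefix_of s n) \<omega> = A (prefix_of s n0) \<omega> \<and> L (A (prefix_of s n) \<omega>) = K))"

definition neighboring :: "(nat \<Rightarrow> 'x) \<Rightarrow> (nat \<Rightarrow> 'x) \<Rightarrow> bool" where
  "neighboring s s' \<longleftrightarrow> (\<exists>t. s t \<noteq> s' t \<and> (\<forall>u. u \<noteq> t \<longrightarrow> s u = s' u))"

definition dp_continual ::
  "real \<Rightarrow> 'w measure \<Rightarrow> ('x list \<Rightarrow> 'w \<Rightarrow> nat) \<Rightarrow> bool" where
  "dp_continual \<epsilon> M A \<longleftrightarrow>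
     (\<forall>s s' E. neighboring s s' \<longrightarrow>
        E \<in> sets (PiM UNIV (\<lambda>_::nat. count_space (UNIV::nat set))) \<longrightarrow>
        measure M {\<omega> \<in> space M. output_seq A s \<omega> \<in> E}
          \<le> exp \<epsilon> * measure M {\<omega> \<in> space M. output_seq A s' \<omega> \<in> E})"

end

theory Submission
  imports Defs
begin

lemma prefix_of_nth: "k < n \<Longrightarrow> prefix_of s n ! k = s k"
  by (simp add: prefix_of_def)

lemma length_prefix_of[simp]: "length (prefix_of s n) = n"
  by (simp add: prefix_of_def)

lemma meas_set:
  assumes "online_rand_alg M A"
  shows "{\<omega>\<in>space M. P (A xs \<omega>)} \<in> sets M"
proof -
  have m: "A xs \<in> measurable M (count_space UNIV)" using assms by (simp add: online_rand_alg_def)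
  have "A xs -` {n. P n} \<inter> space M \<in> sets M" by (rule measurable_sets[OF m]) simp
  moreover have "A xs -` {n. P n} \<inter> space M = {\<omega>\<in>space M. P (A xs \<omega>)}" by auto
  ultimately show ?thesis by simp
qed

lemma sets_coord:
  "{f::nat\<Rightarrow>nat. P (f T)} \<in> sets (PiM UNIV (\<lambda>_::nat. count_space (UNIV::nat set)))"
proof -
  have m: "(\<lambda>f::nat\<Rightarrow>nat. f T) \<in> measurable (PiM UNIV (\<lambda>_::nat. count_space (UNIV::nat set))) (count_space UNIV)"
    by (rule measurable_component_singleton) simp
  have "(\<lambda>f::nat\<Rightarrow>nat. f T) -` {n. P n} \<inter> space (PiM UNIV (\<lambda>_::nat. count_space (UNIV::nat set)))
      \<in> sets (PiM UNIV (\<lambda>_::nat. count_space (UNIV::nat set)))"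
    by (rule measurable_sets[OF m]) simp
  moreover have "(\<lambda>f::nat\<Rightarrow>nat. f T) -` {n. P n} \<inter> space (PiM UNIV (\<lambda>_::nat. count_space (UNIV::nat set)))
      = {f. P (f T)}"
    by (auto simp: space_PiM)
  ultimately show ?thesis by (simp only:)
qed

lemma dp_finite:
  assumes dp: "dp_continual \<epsilon> M A" and eps: "\<epsilon> \<ge> 0"
    and E: "E \<in> sets (PiM UNIV (\<lambda>_::nat. count_space (UNIV::nat set)))"
    and fin: "finite F"
  shows "(\<forall>u. u \<notin> F \<longrightarrow> z u = z' u) \<Longrightarrow>
    measure M {\<omega>\<in>space M. output_seq A z \<omega> \<in> E}
      \<le> exp \<epsilon> ^ card F * measure M {\<omega>\<in>space M. output_seq A z' \<omega> \<in> E}"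
  using fin
proof (induction F arbitrary: z)
  case empty
  then have "z = z'" by auto
  then show ?case by simp
next
  case (insert x F)
  define w where "w = z(x := z' x)"
  have "\<forall>u. u \<notin> F \<longrightarrow> w u = z' u" using insert.prems by (auto simp: w_def)
  then have IH: "measure M {\<omega>\<in>space M. output_seq A w \<omega> \<in> E}
      \<le> exp \<epsilon> ^ card F * measure M {\<omega>\<in>space M. output_seq A z' \<omega> \<in> E}"
    by (rule insert.IH)
  have step: "measure M {\<omega>\<in>space M. output_seq A z \<omega> \<in> E}
      \<le> exp \<epsilon> * measure M {\<omega>\<in>space M. output_seq A w \<omega> \<in> E}"
  proof (cases "z x = z' x")
    case True
    then have "w = z" by (auto simp: w_def)
    moreover have "1 \<le> exp \<epsilon>" using eps by simp
    ultimately show ?thesis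
      using mult_right_mono[OF \<open>1 \<le> exp \<epsilon>\<close> measure_nonneg[of M "{\<omega>\<in>space M. output_seq A z \<omega> \<in> E}"]]
      by simp
  next
    case False
    have "neighboring z w" unfolding neighboring_def w_def using False
      by (intro exI[of _ x]) auto
    then show ?thesis using dp E unfolding dp_continual_def by blast
  qed
  have "measure M {\<omega>\<in>space M. output_seq A z \<omega> \<in> E}
     \<le> exp \<epsilon> * (exp \<epsilon> ^ card F * measure M {\<omega>\<in>space M. output_seq A z' \<omega> \<in> E})"
    using step IH by (meson order_trans mult_left_mono exp_ge_zero)
  then show ?case using insert.hyps by (simp add: mult.assoc)
qed

lemma ident_tendsto:
  assumes alg: "online_rand_alg M A" and id: "identifies_in_limit M A L"
    and K: "K \<in> range L" and s: "is_enumeration s K"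
  shows "(\<lambda>T. measure M {\<omega>\<in>space M. L (A (prefix_of s T) \<omega>) \<noteq> K}) \<longlonglongrightarrow> 0"
proof -
  interpret prob_space M using alg by (simp add: online_rand_alg_def)
  define G where "G T = {\<omega>\<in>space M. L (A (prefix_of s T) \<omega>) \<noteq> K}" for T
  have Gs: "G T \<in> sets M" for T unfolding G_def by (rule meas_set[OF alg])
  have AE: "AE \<omega> in M. \<exists>n0\<ge>1. \<forall>n\<ge>n0. A (prefix_of s n) \<omega> = A (prefix_of s n0) \<omega> \<and> L (A (prefix_of s n) \<omega>) = K"
    using id K s unfolding identifies_in_limit_def by blast
  have lim: "AE \<omega> in M. (\<lambda>T. indicator (G T) \<omega> :: real) \<longlonglongrightarrow> 0"
  proof (rule eventually_mono[OF AE])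
    fix \<omega> assume "\<exists>n0\<ge>1. \<forall>n\<ge>n0. A (prefix_of s n) \<omega> = A (prefix_of s n0) \<omega> \<and> L (A (prefix_of s n) \<omega>) = K"
    then obtain n0 where "\<forall>n\<ge>n0. L (A (prefix_of s n) \<omega>) = K" by blast
    then have "eventually (\<lambda>T. indicator (G T) \<omega> = (0::real)) sequentially"
      by (auto simp: eventually_sequentially G_def indicator_def intro!: exI[of _ n0])
    then show "(\<lambda>T. indicator (G T) \<omega> :: real) \<longlonglongrightarrow> 0" by (rule tendsto_eventually)
  qed
  have "(\<lambda>T. integral\<^sup>L M (indicator (G T) :: 'a \<Rightarrow> real)) \<longlonglongrightarrow> integral\<^sup>L M (\<lambda>\<omega>. 0::real)"
  proof (rule integral_dominated_convergence[where w="\<lambda>_. 1"])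
    show "AE x in M. (\<lambda>T. indicator (G T) x :: real) \<longlonglongrightarrow> 0" by (rule lim)
    show "indicator (G T) \<in> borel_measurable M" for T using Gs by simp
    show "AE x in M. norm (indicator (G T) x :: real) \<le> 1" for T by (simp add: indicator_def)
  qed auto
  then show ?thesis using Gs by (simp add: G_def[symmetric])
qed


theorem theorem1p4:
  fixes L :: "nat \<Rightarrow> ('x::countable) set" and M :: "'w measure"
    and A :: "'x list \<Rightarrow> 'w \<Rightarrow> nat" and \<epsilon> :: real and i j :: nat
  assumes langs: "\<forall>k. is_language (L k)"
    and distinct: "L i \<noteq> L j"
    and inter_inf: "infinite (L i \<inter> L j)"
    and diff_fin: "finite (L i - L j)"
    and eps: "\<epsilon> > 0"
    and alg: "online_rand_alg M A"
    and dp: "dp_continual \<epsilon> M A"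
  shows "\<not> identifies_in_limit M A L"
proof
  assume id: "identifies_in_limit M A L"
  interpret prob_space M using alg by (simp add: online_rand_alg_def)
  define C where "C = L i \<inter> L j"
  define D where "D = L i - L j"
  have Cne: "C \<noteq> {}" using inter_inf C_def by auto
  have cnt: "countable (X :: 'x set)" for X by (rule countableI_type)
  obtain ds where ds: "set ds = D" using finite_list diff_fin D_def by blast
  obtain c0 where c0: "c0 \<in> C" using Cne by blast
  define e where "e n = from_nat_into C (fst (prod_decode n))" for n
  have e_in: "e n \<in> C" for n using Cne by (simp add: e_def from_nat_into)
  have e_inf: "\<exists>n\<ge>N. e n = x" if "x \<in> C" for x N
  proof -
    let ?n = "prod_encode (to_nat_on C x, N)"
    have "?n \<ge> N" by (rule le_prod_encode_2)
    moreover have "e ?n = x" using that cnt by (simp add: e_def from_nat_into_to_nat_on)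
    ultimately show ?thesis by blast
  qed
  define w where "w n = (if n < length ds then ds ! n else e n)" for n
  define zp where "zp p n = (if n < length p then p ! n else e (n - length p))" for p n
  define zq where "zq p n = (if n < length p then (if p ! n \<in> L i then p ! n else c0) else w (n - length p))" for p n
  have zq_enum: "is_enumeration (zq p) (L i)" for p
  proof -
    have "zq p n \<in> L i" for n
      using c0 e_in[of "n - length p"] nth_mem[of "n - length p" ds] ds
      by (auto simp: zq_def w_def C_def D_def)
    then have "range (zq p) \<subseteq> L i" by auto
    moreover have "L i \<subseteq> range (zq p)"
    proof
      fix x assume x: "x \<in> L i"
      show "x \<in> range (zq p)"
      proof (cases "x \<in> L j")
        case False
        then have "x \<in> set ds" using x ds D_def by auto
        then obtain k where k: "k < length ds" "ds ! k = x" by (auto simp: in_set_conv_nth)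
        then have "zq p (length p + k) = x" by (simp add: zq_def w_def)
        then show ?thesis by (metis rangeI)
      next
        case True
        then have "x \<in> C" using x C_def by auto
        then obtain n where n: "n \<ge> length ds" "e n = x" using e_inf by blast
        then have "zq p (length p + n) = x" by (simp add: zq_def w_def)
        then show ?thesis by (metis rangeI)
      qed
    qed
    ultimately show ?thesis by (simp add: is_enumeration_def)
  qed
  have zq_lim: "(\<lambda>T. measure M {\<omega>\<in>space M. L (A (prefix_of (zq p) T) \<omega>) \<noteq> L i}) \<longlonglongrightarrow> 0" for p
    using ident_tendsto[OF alg id _ zq_enum] by simp
  have zp_bound: "measure M {\<omega>\<in>space M. L (A (prefix_of (zp p) (Suc T)) \<omega>) \<noteq> L i}
     \<le> exp \<epsilon> ^ (length p + length ds) * measure M {\<omega>\<in>space M. L (A (prefix_of (zq p) (Suc T)) \<omega>) \<noteq> L i}" for p T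
  proof -
    have "measure M {\<omega>\<in>space M. output_seq A (zp p) \<omega> \<in> {f. L (f T) \<noteq> L i}}
      \<le> exp \<epsilon> ^ card {..<length p + length ds} * measure M {\<omega>\<in>space M. output_seq A (zq p) \<omega> \<in> {f. L (f T) \<noteq> L i}}"
      by (rule dp_finite[OF dp _ sets_coord]) (use eps in \<open>auto simp: zp_def zq_def w_def\<close>)
    then show ?thesis by (simp add: output_seq_def)
  qed
  have choose: "\<exists>T\<ge>b. measure M {\<omega>\<in>space M. L (A (prefix_of (zp p) (Suc T)) \<omega>) \<noteq> L i} < 1/2" for p b
  proof -
    have "(\<lambda>T. exp \<epsilon> ^ (length p + length ds) * measure M {\<omega>\<in>space M. L (A (prefix_of (zq p) (Suc T)) \<omega>) \<noteq> L i})
       \<longlonglongrightarrow> exp \<epsilon> ^ (length p + length ds) * 0"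
      by (intro tendsto_mult tendsto_const LIMSEQ_Suc[OF zq_lim])
    then have "eventually (\<lambda>T. exp \<epsilon> ^ (length p + length ds) * measure M {\<omega>\<in>space M. L (A (prefix_of (zq p) (Suc T)) \<omega>) \<noteq> L i} < 1/2) sequentially"
      by (rule order_tendstoD(2)) simp
    then obtain N where N: "\<forall>T\<ge>N. exp \<epsilon> ^ (length p + length ds) * measure M {\<omega>\<in>space M. L (A (prefix_of (zq p) (Suc T)) \<omega>) \<noteq> L i} < 1/2"
      by (auto simp: eventually_sequentially)
    have "exp \<epsilon> ^ (length p + length ds) * measure M {\<omega>\<in>space M. L (A (prefix_of (zq p) (Suc (max N b))) \<omega>) \<noteq> L i} < 1/2"
      using N by simp
    then have "measure M {\<omega>\<in>space M. L (A (prefix_of (zp p) (Suc (max N b))) \<omega>) \<noteq> L i} < 1/2"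
      by (rule le_less_trans[OF zp_bound])
    then show ?thesis by (intro exI[of _ "max N b"]) auto
  qed
  define \<tau> where "\<tau> p b = (SOME T. T \<ge> b \<and> measure M {\<omega>\<in>space M. L (A (prefix_of (zp p) (Suc T)) \<omega>) \<noteq> L i} < 1/2)" for p b
  have \<tau>: "\<tau> p b \<ge> b \<and> measure M {\<omega>\<in>space M. L (A (prefix_of (zp p) (Suc (\<tau> p b))) \<omega>) \<noteq> L i} < 1/2" for p b
    unfolding \<tau>_def by (rule someI_ex) (use choose in blast)
  define v where "v = from_nat_into (L j)"
  have Lj_ne: "L j \<noteq> {}" using Cne C_def by auto
  have v_range: "range v = L j" unfolding v_def by (rule range_from_nat_into[OF Lj_ne cnt])
  define S where "S p = Suc (\<tau> p (length p))" for p
  define P where "P = rec_nat [] (\<lambda>n q. prefix_of (zp q) (S q) @ [v n])"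
  have PS: "P (Suc n) = prefix_of (zp (P n)) (S (P n)) @ [v n]" for n by (simp add: P_def)
  have lenP: "length (P (Suc n)) = Suc (S (P n))" for n by (simp add: PS)
  have S_ge: "S p > length p" for p using \<tau>[of "length p" p] by (simp add: S_def)
  have len_ge: "length (P n) \<ge> n" for n
  proof (induction n)
    case (Suc n) then show ?case using lenP[of n] S_ge[of "P n"] by simp
  qed simp
  have lenmono: "length (P n) \<le> length (P (n + d))" for n d
  proof (induction d)
    case (Suc d) then show ?case using lenP[of "n + d"] S_ge[of "P (n + d)"] by simp
  qed simp
  have P_step: "k < length (P n) \<Longrightarrow> P (Suc n) ! k = P n ! k" for k n
    using S_ge[of "P n"] by (simp add: PS nth_append prefix_of_nth zp_def)
  have P_mono: "k < length (P n) \<Longrightarrow> P (n + d) ! k = P n ! k" for k n d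
  proof (induction d)
    case (Suc d)
    have "k < length (P (n + d))" using Suc.prems lenmono[of n d] by simp
    then show ?case using Suc P_step[of k "n + d"] by simp
  qed simp
  define y where "y k = P (Suc k) ! k" for k
  have y_P: "y k = P n ! k" if "k < length (P n)" for k n
  proof -
    have k1: "k < length (P (Suc k))" using len_ge[of "Suc k"] by simp
    have "P (Suc k + n) ! k = P (Suc k) ! k" by (rule P_mono[OF k1])
    moreover have "P (n + Suc k) ! k = P n ! k" by (rule P_mono[OF that])
    ultimately show ?thesis by (simp add: y_def add.commute)
  qed
  have setP: "set (P n) \<subseteq> L j" for n
  proof (induction n)
    case 0 then show ?case by (simp add: P_def)
  next
    case (Suc n)
    have "zp (P n) k \<in> L j" for k
      using Suc nth_mem[of k "P n"] e_in[of "k - length (P n)"] by (auto simp: zp_def C_def)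
    moreover have "v n \<in> L j" using v_range by auto
    ultimately show ?case by (auto simp: PS prefix_of_def)
  qed
  have y_enum: "is_enumeration y (L j)"
  proof -
    have "y k \<in> L j" for k
      using setP[of "Suc k"] nth_mem[of k "P (Suc k)"] len_ge[of "Suc k"] by (auto simp: y_def)
    moreover have "x \<in> range y" if xj: "x \<in> L j" for x
    proof -
      obtain n where n: "x = v n" using xj v_range by (metis imageE)
      have "y (S (P n)) = P (Suc n) ! S (P n)" by (rule y_P) (simp add: lenP)
      also have "\<dots> = v n" by (simp add: PS nth_append)
      finally show ?thesis using n by (metis rangeI)
    qed
    ultimately show ?thesis by (auto simp: is_enumeration_def)
  qed
  have y_lim: "(\<lambda>T. measure M {\<omega>\<in>space M. L (A (prefix_of y T) \<omega>) \<noteq> L j}) \<longlonglongrightarrow> 0"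
    using ident_tendsto[OF alg id _ y_enum] by simp
  have pref: "prefix_of y (S (P n)) = prefix_of (zp (P n)) (S (P n))" for n
  proof (rule nth_equalityI)
    fix k assume "k < length (prefix_of y (S (P n)))"
    then have k: "k < S (P n)" by simp
    have "y k = P (Suc n) ! k" by (rule y_P) (use k lenP in simp)
    then show "prefix_of y (S (P n)) ! k = prefix_of (zp (P n)) (S (P n)) ! k"
      using k by (simp add: prefix_of_nth PS nth_append)
  qed simp
  have big: "measure M {\<omega>\<in>space M. L (A (prefix_of y (S (P n))) \<omega>) \<noteq> L j} \<ge> 1/2" for n
  proof -
    let ?X = "{\<omega>\<in>space M. L (A (prefix_of (zp (P n)) (S (P n))) \<omega>) \<noteq> L i}"
    let ?Y = "{\<omega>\<in>space M. L (A (prefix_of (zp (P n)) (S (P n))) \<omega>) \<noteq> L j}"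
    have X: "measure M ?X < 1/2" using \<tau>[of "length (P n)" "P n"] by (simp add: S_def)
    have Xs: "?X \<in> sets M" by (rule meas_set[OF alg])
    have Ys: "?Y \<in> sets M" by (rule meas_set[OF alg])
    have "space M - ?X \<subseteq> ?Y" using distinct by auto
    then have "measure M (space M - ?X) \<le> measure M ?Y" by (rule finite_measure_mono[OF _ Ys])
    moreover have "measure M (space M - ?X) = 1 - measure M ?X" by (rule prob_compl[OF Xs])
    ultimately show ?thesis using X pref[of n] by simp
  qed
  obtain N where N: "\<forall>T\<ge>N. measure M {\<omega>\<in>space M. L (A (prefix_of y T) \<omega>) \<noteq> L j} < 1/2"
    using order_tendstoD(2)[OF y_lim, of "1/2"] by (auto simp: eventually_sequentially)
  have "S (P N) \<ge> N" using S_ge[of "P N"] len_ge[of N] by simp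
  then show False using N big[of N] by force
qed

end
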